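(* Let $X,Y$ be compact metric spaces, and let $A\subseteq X$, $B\subseteq Y$ be closed subsets such that $A$ contains every isolated point of $X$ and $B$ contains every isolated point of $Y$. Let $I(X,A)$ and $I(Y,B)$ be constructed as described in the context (with arbitrary choices of the enumerations). Then every homeomorphism $g:X\to Y$ with $g[A]=B$ extends to a homeomorphism $I(X,A)\to I(Y,B)$. Conversely, if $f:I(X,A)\to I(Y,B)$ is a homeomorphism, then $f[X]=Y$ and $f[A]=B$.
   Context: For a compact metric space $X$ and a closed subset $A\subseteq X$ containing all isolated points of $X$, $I(X,A)\subseteq X\times[0,1]$ is defined as follows: let $(d_n)_{n\in\mathbb{N}}$ (with $\mathbb{N}=\{1,2,\dots\}$) enumerate, with each term repeated infinitely often, a countable dense subset of $A$; set $\widetilde{a}_n=(d_n,\tfrac1n)$ and $I(X,A)=(X\times\{0\})\cup\{\widetilde{a}_1,\widetilde{a}_2,\dots\}$. This is a compact subset of $X\times[0,1]$, and $X$ is identified with $X\times\{0\}$ (so that $f[X]$, $f[A]$ refer to these copies). $I(Y,B)$ is defined analogously from $Y,B$. *)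

theory Defs
  imports "HOL-Analysis.Analysis"
begin

definition isolated_points :: "'a::metric_space set \<Rightarrow> 'a set" where
  "isolated_points X = {x \<in> X. \<not> x islimpt X}"

text \<open>d (indexed by the positive naturals 1,2,...) enumerates, with every term repeated
  infinitely often, a countable dense subset of A. (Countability is automatic for the
  range of a sequence.)\<close>
definition dense_enum :: "'a::metric_space set \<Rightarrow> (nat \<Rightarrow> 'a) \<Rightarrow> bool" where
  "dense_enum A d \<longleftrightarrow>
     d ` {1..} \<subseteq> A \<and> A \<subseteq> closure (d ` {1..}) \<and>
     (\<forall>n\<ge>1. infinite {m. m \<ge> 1 \<and> d m = d n})"

definition I_space :: "'a::metric_space set \<Rightarrow> (nat \<Rightarrow> 'a) \<Rightarrow> ('a \<times> real) set" where
  "I_space X d = (X \<times> {0}) \<union> {(d n, 1 / real n) | n. n \<ge> 1}"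

end

theory Submission
  imports Defs
begin


lemma dist_pair_le: "dist (a, s) (b, t) \<le> dist a b + dist s t"
  unfolding dist_Pair_Pair by (rule sqrt_sum_squares_le_sum) auto

lemma dist_pair_same: "dist (a, s) (b, s) = dist a b"
  unfolding dist_Pair_Pair by simp

lemma recip_gap:
  fixes n m :: nat
  assumes "n \<ge> 1" "m \<ge> 1" "m \<noteq> n"
  shows "1 / real n - 1 / (real n + 1) \<le> \<bar>1 / real m - 1 / real n\<bar>"
proof (cases "m < n")
  case True
  then have m: "real m + 1 \<le> real n" "real m \<ge> 1" using assms by auto
  have n2: "real n \<ge> 2" using m by simp
  have "1 / real n - 1 / (real n + 1) \<le> 1 / (real n - 1) - 1 / real n"
  proof -
    have "1 / real n - 1 / (real n + 1) = 1 / (real n * (real n + 1))" using n2 by (simp add: field_simps)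
    also have "\<dots> \<le> 1 / (real n * (real n - 1))" using n2 by (intro divide_left_mono mult_mono) auto
    also have "\<dots> = 1 / (real n - 1) - 1 / real n" using n2 by (simp add: field_simps)
    finally show ?thesis .
  qed
  also have "1 / (real n - 1) \<le> 1 / real m"
    using m by (intro divide_left_mono) auto
  finally show ?thesis by simp
next
  case False
  then have m: "real m \<ge> real n + 1" "real n \<ge> 1" using assms by auto
  have "1 / real m \<le> 1 / (real n + 1)" using m by (intro divide_left_mono) auto
  moreover have "1 / real m \<le> 1 / real n" using m by (intro divide_left_mono) auto
  ultimately show ?thesis using assms(3) by (simp add: abs_if)
qed

lemma iso_rad:
  assumes "n \<ge> 1" "q \<in> I_space X d" "dist q (d n, 1 / real n) < 1 / real n - 1 / (real n + 1)"
  shows "q = (d n, 1 / real n)"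
proof -
  have s: "dist (snd q) (1 / real n) < 1 / real n - 1 / (real n + 1)"
    using dist_snd_le[of q "(d n, 1 / real n)"] assms(3) by simp
  from assms(2) consider y where "q = (y, 0)" | m where "m \<ge> 1" "q = (d m, 1 / real m)"
    unfolding I_space_def by auto
  then show ?thesis
  proof cases
    case 1
    with s assms(1) show ?thesis by (simp add: dist_real_def)
  next
    case 2
    show ?thesis
    proof (cases "m = n")
      case False
      with recip_gap[OF assms(1) 2(1)] s 2 show ?thesis by (simp add: dist_real_def)
    qed (use 2 in auto)
  qed
qed

definition Fmap :: "('a \<Rightarrow> 'b) \<Rightarrow> (nat \<Rightarrow> nat) \<Rightarrow> (nat \<Rightarrow> 'b) \<Rightarrow> 'a \<times> real \<Rightarrow> 'b \<times> real" where
  "Fmap g \<phi> e p = (if snd p = 0 then (g (fst p), 0)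
     else (e (\<phi> (nat \<lfloor>1 / snd p\<rfloor>)), 1 / real (\<phi> (nat \<lfloor>1 / snd p\<rfloor>))))"

lemma Fmap_0 [simp]: "Fmap g \<phi> e (x, 0) = (g x, 0)"
  by (simp add: Fmap_def)

lemma Fmap_n [simp]: "n \<ge> 1 \<Longrightarrow> Fmap g \<phi> e (d, 1 / real n) = (e (\<phi> n), 1 / real (\<phi> n))"
  by (simp add: Fmap_def)

lemma Fmap_cont:
  fixes X :: "'a::metric_space set" and g :: "'a \<Rightarrow> 'b::metric_space"
  assumes cg: "continuous_on X g" and dX: "\<And>n. n \<ge> 1 \<Longrightarrow> d n \<in> X"
    and hX: "\<And>n. n \<ge> 1 \<Longrightarrow> h (e (\<phi> n)) \<in> X \<and> g (h (e (\<phi> n))) = e (\<phi> n)"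
    and conv: "\<And>\<epsilon>. \<epsilon> > 0 \<Longrightarrow> \<exists>N. \<forall>n\<ge>N. dist (d n) (h (e (\<phi> n))) < \<epsilon>"
    and big: "\<And>M. \<exists>N. \<forall>n\<ge>N. \<phi> n \<ge> M"
  shows "continuous_on (I_space X d) (Fmap g \<phi> e)"
  unfolding continuous_on_iff
proof (intro ballI allI impI)
  fix p \<epsilon> assume pS: "p \<in> I_space X d" and ep: "(\<epsilon>::real) > 0"
  from pS consider x where "x \<in> X" "p = (x, 0)" | n where "n \<ge> 1" "p = (d n, 1 / real n)"
    unfolding I_space_def by auto
  then show "\<exists>\<delta>>0. \<forall>x'\<in>I_space X d. dist x' p < \<delta> \<longrightarrow> dist (Fmap g \<phi> e x') (Fmap g \<phi> e p) < \<epsilon>"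
  proof cases
    case 2
    show ?thesis
    proof (intro exI[of _ "1 / real n - 1 / (real n + 1)"] conjI ballI impI)
      have "real n > 0" using 2 by simp
      then show "0 < 1 / real n - 1 / (real n + 1)" by (simp add: field_simps add_pos_pos)
    next
      fix q assume "q \<in> I_space X d" "dist q p < 1 / real n - 1 / (real n + 1)"
      then have "q = p" using iso_rad[of n q X d] 2 by simp
      then show "dist (Fmap g \<phi> e q) (Fmap g \<phi> e p) < \<epsilon>" using ep by simp
    qed
  next
    case 1
    obtain \<delta>0 where d0: "\<delta>0 > 0" "\<And>y. y \<in> X \<Longrightarrow> dist y x < \<delta>0 \<Longrightarrow> dist (g y) (g x) < \<epsilon> / 3"
      using cg 1(1) ep unfolding continuous_on_iff by (metis divide_pos_pos zero_less_numeral)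
    obtain N1 where N1: "\<And>n. n \<ge> N1 \<Longrightarrow> dist (d n) (h (e (\<phi> n))) < \<delta>0 / 2"
      using conv[of "\<delta>0 / 2"] d0(1) by auto
    define M where "M = nat \<lceil>3 / \<epsilon>\<rceil> + 1"
    obtain N2 where N2: "\<And>n. n \<ge> N2 \<Longrightarrow> \<phi> n \<ge> M" using big by blast
    have M: "1 / real M < \<epsilon> / 3"
    proof -
      have "3 / \<epsilon> < real M" unfolding M_def by linarith
      moreover have "real M > 0" unfolding M_def by simp
      ultimately show ?thesis using ep by (simp add: field_simps)
    qed
    show ?thesis
    proof (intro exI[of _ "min (\<delta>0 / 2) (1 / real (N1 + N2 + 1))"] conjI ballI impI)
      show "0 < min (\<delta>0 / 2) (1 / real (N1 + N2 + 1))" using d0 by simp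
    next
      fix q assume qS: "q \<in> I_space X d" and qd: "dist q p < min (\<delta>0 / 2) (1 / real (N1 + N2 + 1))"
      from qS consider y where "y \<in> X" "q = (y, 0)" | n where "n \<ge> 1" "q = (d n, 1 / real n)"
        unfolding I_space_def by auto
      then show "dist (Fmap g \<phi> e q) (Fmap g \<phi> e p) < \<epsilon>"
      proof cases
        case 1
        then have "dist y x < \<delta>0" using qd \<open>p = (x, 0)\<close> d0(1) by (simp add: dist_pair_same)
        then have "dist (g y) (g x) < \<epsilon> / 3" using d0(2)[of y] 1 by simp
        then show ?thesis using 1 \<open>p = (x, 0)\<close> ep by (simp add: dist_pair_same)
      next
        case (2 n)
        have sn: "1 / real n < 1 / real (N1 + N2 + 1)"
          using dist_snd_le[of q p] qd 2 \<open>p = (x, 0)\<close> by (simp add: dist_real_def)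
        then have nN: "n \<ge> N1" "n \<ge> N2"
          using 2(1) by (auto simp: field_simps)
        have dx: "dist (d n) x < \<delta>0 / 2"
          using dist_fst_le[of q p] qd 2 \<open>p = (x, 0)\<close> by simp
        have y: "h (e (\<phi> n)) \<in> X" "g (h (e (\<phi> n))) = e (\<phi> n)" using hX 2(1) by auto
        have "dist (h (e (\<phi> n))) x \<le> dist (h (e (\<phi> n))) (d n) + dist (d n) x"
          by (rule dist_triangle)
        also have "\<dots> < \<delta>0" using N1[OF nN(1)] dx by (simp add: dist_commute)
        finally have "dist (e (\<phi> n)) (g x) < \<epsilon> / 3" using d0(2)[OF y(1)] y(2) by simp
        moreover have "1 / real (\<phi> n) \<le> 1 / real M"
          using N2[OF nN(2)] by (intro divide_left_mono) (auto simp: M_def)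
        moreover have "dist (e (\<phi> n), 1 / real (\<phi> n)) (g x, 0) \<le> dist (e (\<phi> n)) (g x) + dist (1 / real (\<phi> n)) 0"
          by (rule dist_pair_le)
        moreover have "dist (1 / real (\<phi> n)) 0 = 1 / real (\<phi> n)" by (simp add: dist_real_def)
        ultimately have "dist (e (\<phi> n), 1 / real (\<phi> n)) (g x, 0) < \<epsilon>" using M ep by linarith
        then show ?thesis using 2 \<open>p = (x, 0)\<close> by simp
      qed
    qed
  qed
qed



definition bfinv :: "(nat \<times> nat) set \<Rightarrow> bool" where
  "bfinv P \<longleftrightarrow> finite P \<and> P \<subseteq> {1..} \<times> {1..} \<and> (\<forall>a b a' b'. (a, b) \<in> P \<longrightarrow> (a', b') \<in> P \<longrightarrow> (a = a') = (b = b'))"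

lemma bfinv_conv: "bfinv (converse P) = bfinv P"
  unfolding bfinv_def finite_converse by (simp add: subset_iff) blast

definition fwd :: "(nat \<Rightarrow> nat \<Rightarrow> real) \<Rightarrow> nat \<Rightarrow> (nat \<times> nat) set \<Rightarrow> (nat \<times> nat) set" where
  "fwd c k P = (let n = LEAST n. n \<ge> 1 \<and> n \<notin> Domain P in
     insert (n, SOME m. m \<ge> 1 \<and> m \<notin> Range P \<and> c n m < 1 / real k) P)"

definition bwd :: "(nat \<Rightarrow> nat \<Rightarrow> real) \<Rightarrow> nat \<Rightarrow> (nat \<times> nat) set \<Rightarrow> (nat \<times> nat) set" where
  "bwd c k P = converse (fwd (\<lambda>m n. c n m) k (converse P))"

lemma fwd_props:
  assumes H: "\<forall>n\<ge>1. \<forall>\<epsilon>>0. infinite {m. m \<ge> 1 \<and> c n m < \<epsilon>}"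
    and inv: "bfinv P" and k: "k \<ge> 1"
  shows "bfinv (fwd c k P)" "P \<subseteq> fwd c k P" "\<forall>q \<in> fwd c k P - P. c (fst q) (snd q) < 1 / real k"
    "{1..<k} \<subseteq> Domain P \<Longrightarrow> {1..k} \<subseteq> Domain (fwd c k P)"
proof -
  define n where "n = (LEAST n. n \<ge> 1 \<and> n \<notin> Domain P)"
  have finP: "finite P" using inv by (simp add: bfinv_def)
  have "finite (Domain P)" using finP by (simp add: finite_Domain)
  then have "infinite ({1..} - Domain P)" by (simp add: infinite_Ici Diff_infinite_finite)
  then obtain n0 where "n0 \<in> {1..} - Domain P" by (meson finite.emptyI rev_finite_subset subsetI)
  then have "n \<ge> 1 \<and> n \<notin> Domain P" unfolding n_def by (intro LeastI[of "\<lambda>n. n \<ge> 1 \<and> n \<notin> Domain P" n0]) auto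
  then have n: "n \<ge> 1" "n \<notin> Domain P" by auto
  have nle: "\<And>j. j \<ge> 1 \<Longrightarrow> j \<notin> Domain P \<Longrightarrow> n \<le> j" unfolding n_def by (auto intro: Least_le)
  have "infinite ({m. m \<ge> 1 \<and> c n m < 1 / real k} - Range P)"
    using H n(1) k finP by (simp add: Diff_infinite_finite finite_Range)
  then obtain m0 where "m0 \<in> {m. m \<ge> 1 \<and> c n m < 1 / real k} - Range P"
    by (meson finite.emptyI rev_finite_subset subsetI)
  then have "\<exists>m. m \<ge> 1 \<and> m \<notin> Range P \<and> c n m < 1 / real k" by auto
  then have m: "(SOME m. m \<ge> 1 \<and> m \<notin> Range P \<and> c n m < 1 / real k) \<ge> 1"
    "(SOME m. m \<ge> 1 \<and> m \<notin> Range P \<and> c n m < 1 / real k) \<notin> Range P"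
    "c n (SOME m. m \<ge> 1 \<and> m \<notin> Range P \<and> c n m < 1 / real k) < 1 / real k"
    by (metis (mono_tags, lifting) someI_ex)+
  have eq: "fwd c k P = insert (n, SOME m. m \<ge> 1 \<and> m \<notin> Range P \<and> c n m < 1 / real k) P"
    unfolding fwd_def n_def Let_def ..
  show "bfinv (fwd c k P)" using inv n m unfolding eq bfinv_def
    by (auto simp: Domain_iff Range_iff)
  show "P \<subseteq> fwd c k P" unfolding eq by auto
  show "\<forall>q \<in> fwd c k P - P. c (fst q) (snd q) < 1 / real k" using m unfolding eq by auto
  assume sub: "{1..<k} \<subseteq> Domain P"
  show "{1..k} \<subseteq> Domain (fwd c k P)"
  proof
    fix j assume j: "j \<in> {1..k}"
    show "j \<in> Domain (fwd c k P)"
    proof (cases "j < k")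
      case True then show ?thesis using sub j unfolding eq by auto
    next
      case False
      then have "j = k" using j by auto
      show ?thesis
      proof (cases "k \<in> Domain P")
        case True then show ?thesis using \<open>j = k\<close> unfolding eq by auto
      next
        case False
        then have "n \<le> k" using nle k by auto
        moreover have "\<not> n < k" using sub n by auto
        ultimately show ?thesis using \<open>j = k\<close> unfolding eq by auto
      qed
    qed
  qed
qed

lemma bwd_props:
  assumes H: "\<forall>m\<ge>1. \<forall>\<epsilon>>0. infinite {n. n \<ge> 1 \<and> c n m < \<epsilon>}"
    and inv: "bfinv P" and k: "k \<ge> 1"
  shows "bfinv (bwd c k P)" "P \<subseteq> bwd c k P" "\<forall>q \<in> bwd c k P - P. c (fst q) (snd q) < 1 / real k"
    "{1..<k} \<subseteq> Range P \<Longrightarrow> {1..k} \<subseteq> Range (bwd c k P)"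
proof -
  have inv': "bfinv (converse P)" using inv bfinv_conv by blast
  have H': "\<forall>n\<ge>1. \<forall>\<epsilon>>0. infinite {m. m \<ge> 1 \<and> (\<lambda>m n. c n m) n m < \<epsilon>}"
    using H by simp
  note F = fwd_props[where c="\<lambda>m n. c n m" and P="P\<inverse>" and k=k, OF H' inv' k]
  show "bfinv (bwd c k P)" unfolding bwd_def using F(1) bfinv_conv by blast
  show "P \<subseteq> bwd c k P" unfolding bwd_def using F(2) by auto
  show "\<forall>q \<in> bwd c k P - P. c (fst q) (snd q) < 1 / real k" unfolding bwd_def
  proof
    fix q assume "q \<in> (fwd (\<lambda>m n. c n m) k (P\<inverse>))\<inverse> - P"
    then have "(snd q, fst q) \<in> fwd (\<lambda>m n. c n m) k (P\<inverse>) - P\<inverse>" by (cases q) auto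
    then show "c (fst q) (snd q) < 1 / real k" using F(3) by (metis (no_types, lifting) fst_conv snd_conv)
  qed
  assume "{1..<k} \<subseteq> Range P"
  then show "{1..k} \<subseteq> Range (bwd c k P)" unfolding bwd_def using F(4) by simp
qed

fun stg :: "(nat \<Rightarrow> nat \<Rightarrow> real) \<Rightarrow> nat \<Rightarrow> (nat \<times> nat) set" where
  "stg c 0 = {}"
| "stg c (Suc k) = bwd c (Suc k) (fwd c (Suc k) (stg c k))"

lemma stg_inv:
  assumes H1: "\<forall>n\<ge>1. \<forall>\<epsilon>>0. infinite {m. m \<ge> 1 \<and> c n m < \<epsilon>}"
    and H2: "\<forall>m\<ge>1. \<forall>\<epsilon>>0. infinite {n. n \<ge> 1 \<and> c n m < \<epsilon>}"
  shows "bfinv (stg c k) \<and> {1..k} \<subseteq> Domain (stg c k) \<and> {1..k} \<subseteq> Range (stg c k)"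
proof (induction k)
  case 0
  have "bfinv {}" by (simp add: bfinv_def)
  then show ?case by simp
next
  case (Suc k)
  have i: "bfinv (stg c k)" "{1..<Suc k} \<subseteq> Domain (stg c k)" "{1..<Suc k} \<subseteq> Range (stg c k)"
    using Suc by auto
  note F = fwd_props[where c=c and P="stg c k" and k="Suc k", OF H1 i(1)]
  note B = bwd_props[where c=c and P="fwd c (Suc k) (stg c k)" and k="Suc k", OF H2 F(1)]
  have "{1..<Suc k} \<subseteq> Range (fwd c (Suc k) (stg c k))" using i(3) F(2) by auto
  then have R: "{1..Suc k} \<subseteq> Range (stg c (Suc k))" using B(4) by simp
  have D: "{1..Suc k} \<subseteq> Domain (stg c (Suc k))" using F(4)[OF _ i(2)] B(2) by auto
  have "bfinv (stg c (Suc k))" using B(1) by simp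
  then show ?case using R D by blast
qed

lemma stg_step:
  assumes H1: "\<forall>n\<ge>1. \<forall>\<epsilon>>0. infinite {m. m \<ge> 1 \<and> c n m < \<epsilon>}"
    and H2: "\<forall>m\<ge>1. \<forall>\<epsilon>>0. infinite {n. n \<ge> 1 \<and> c n m < \<epsilon>}"
  shows "stg c k \<subseteq> stg c (Suc k) \<and> (\<forall>q\<in>stg c (Suc k) - stg c k. c (fst q) (snd q) < 1 / real (Suc k))"
proof -
  have i: "bfinv (stg c k)" using stg_inv[OF H1 H2] by blast
  note F = fwd_props[where c=c and P="stg c k" and k="Suc k", OF H1 i(1)]
  note B = bwd_props[where c=c and P="fwd c (Suc k) (stg c k)" and k="Suc k", OF H2 F(1)]
  have M: "stg c k \<subseteq> stg c (Suc k)" using F(2) B(2) by simp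
  have E: "\<forall>q\<in>stg c (Suc k) - stg c k. c (fst q) (snd q) < 1 / real (Suc k)"
  proof
    fix q assume q: "q \<in> stg c (Suc k) - stg c k"
    show "c (fst q) (snd q) < 1 / real (Suc k)"
    proof (cases "q \<in> fwd c (Suc k) (stg c k)")
      case True then show ?thesis using F(3) q by simp
    next
      case False then show ?thesis using B(3) q by simp
    qed
  qed
  show ?thesis using M E by blast
qed

lemma stg_mono:
  assumes H1: "\<forall>n\<ge>1. \<forall>\<epsilon>>0. infinite {m. m \<ge> 1 \<and> c n m < \<epsilon>}"
    and H2: "\<forall>m\<ge>1. \<forall>\<epsilon>>0. infinite {n. n \<ge> 1 \<and> c n m < \<epsilon>}"
  shows "k \<le> j \<Longrightarrow> stg c k \<subseteq> stg c j \<and> (\<forall>q\<in>stg c j - stg c k. c (fst q) (snd q) < 1 / real (Suc k))"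
proof (induction j rule: dec_induct)
  case base then show ?case by simp
next
  case (step j)
  have S: "stg c j \<subseteq> stg c (Suc j)" "\<forall>q\<in>stg c (Suc j) - stg c j. c (fst q) (snd q) < 1 / real (Suc j)"
    using stg_step[OF H1 H2, of j] by auto
  have "1 / real (Suc j) \<le> 1 / real (Suc k)" using step(1) by (intro divide_left_mono) auto
  then show ?case using step(3) S by (meson DiffD1 DiffD2 DiffI order.strict_trans2 subset_trans)
qed

lemma back_forth:
  fixes c :: "nat \<Rightarrow> nat \<Rightarrow> real"
  assumes H1: "\<forall>n\<ge>1. \<forall>\<epsilon>>0. infinite {m. m \<ge> 1 \<and> c n m < \<epsilon>}"
    and H2: "\<forall>m\<ge>1. \<forall>\<epsilon>>0. infinite {n. n \<ge> 1 \<and> c n m < \<epsilon>}"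
  shows "\<exists>\<phi> \<psi>. (\<forall>n\<ge>1. \<phi> n \<ge> 1 \<and> \<psi> (\<phi> n) = n) \<and> (\<forall>m\<ge>1. \<psi> m \<ge> 1 \<and> \<phi> (\<psi> m) = m) \<and>
     (\<forall>\<epsilon>>0. \<exists>N. \<forall>n\<ge>N. c n (\<phi> n) < \<epsilon>) \<and> (\<forall>\<epsilon>>0. \<exists>N. \<forall>m\<ge>N. c (\<psi> m) m < \<epsilon>)"
proof -
  define R where "R = (\<Union>k. stg c k)"
  have inv: "\<And>k. bfinv (stg c k) \<and> {1..k} \<subseteq> Domain (stg c k) \<and> {1..k} \<subseteq> Range (stg c k)"
    using stg_inv[OF H1 H2] by blast
  have mono: "\<And>k j. k \<le> j \<Longrightarrow> stg c k \<subseteq> stg c j"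
    and err: "\<And>k j q. k \<le> j \<Longrightarrow> q \<in> stg c j - stg c k \<Longrightarrow> c (fst q) (snd q) < 1 / real (Suc k)"
    using stg_mono[OF H1 H2] by blast+
  have inj: "(a = a') = (b = b')" if ab: "(a, b) \<in> R" "(a', b') \<in> R" for a b a' b'
  proof -
    have "(a, b) \<in> (\<Union>k. stg c k)" using ab(1) unfolding R_def .
    then obtain k where "(a, b) \<in> stg c k" by blast
    moreover obtain k' where "(a', b') \<in> stg c k'" using ab(2) by (auto simp: R_def)
    ultimately
    have m: "(a, b) \<in> stg c (max k k')" "(a', b') \<in> stg c (max k k')"
      using mono[of k "max k k'"] mono[of k' "max k k'"] by auto
    have "bfinv (stg c (max k k'))" using inv by blast
    then have all: "\<forall>a b a' b'. (a, b) \<in> stg c (max k k') \<longrightarrow> (a', b') \<in> stg c (max k k') \<longrightarrow> (a = a') = (b = b')"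
      by (simp add: bfinv_def)
    show ?thesis by (rule all[rule_format, OF m])
  qed
  have Rsub: "a \<ge> 1 \<and> b \<ge> 1" if ab: "(a, b) \<in> R" for a b
  proof -
    obtain k where "(a, b) \<in> stg c k" using ab by (auto simp: R_def)
    moreover have "stg c k \<subseteq> {1..} \<times> {1..}" using inv[of k] by (simp add: bfinv_def)
    ultimately show ?thesis by auto
  qed
  have dom: "\<exists>m. (n, m) \<in> R" if n1: "n \<ge> 1" for n
  proof -
    have "n \<in> Domain (stg c n)" using inv[of n] n1 by auto
    then obtain m where "(n, m) \<in> stg c n" by blast
    then show ?thesis by (auto simp: R_def)
  qed
  have ran: "\<exists>n. (n, m) \<in> R" if m1: "m \<ge> 1" for m
  proof -
    have "m \<in> Range (stg c m)" using inv[of m] m1 by auto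
    then obtain n where "(n, m) \<in> stg c m" by blast
    then show ?thesis by (auto simp: R_def)
  qed
  define \<phi> where "\<phi> n = (SOME m. (n, m) \<in> R)" for n
  define \<psi> where "\<psi> m = (SOME n. (n, m) \<in> R)" for m
  have \<phi>R: "(n, \<phi> n) \<in> R" if "n \<ge> 1" for n
    unfolding \<phi>_def using dom[OF that] by (rule someI_ex)
  have \<psi>R: "(\<psi> m, m) \<in> R" if "m \<ge> 1" for m
    unfolding \<psi>_def using ran[OF that] by (rule someI_ex)
  have P1: "\<forall>n\<ge>1. \<phi> n \<ge> 1 \<and> \<psi> (\<phi> n) = n"
  proof (intro allI impI conjI)
    fix n :: nat assume n: "n \<ge> 1"
    show "\<phi> n \<ge> 1" using Rsub \<phi>R[OF n] by blast
    then have "(\<psi> (\<phi> n), \<phi> n) \<in> R" by (rule \<psi>R)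
    then show "\<psi> (\<phi> n) = n" using inj[OF _ \<phi>R[OF n]] by simp
  qed
  have P2: "\<forall>m\<ge>1. \<psi> m \<ge> 1 \<and> \<phi> (\<psi> m) = m"
  proof (intro allI impI conjI)
    fix m :: nat assume m: "m \<ge> 1"
    show "\<psi> m \<ge> 1" using Rsub \<psi>R[OF m] by blast
    then have pp: "(\<psi> m, \<phi> (\<psi> m)) \<in> R" by (rule \<phi>R)
    show "\<phi> (\<psi> m) = m" using inj[OF \<psi>R[OF m] pp] by simp
  qed
  have P3: "\<forall>\<epsilon>>0. \<exists>N. \<forall>n\<ge>N. c n (\<phi> n) < \<epsilon>"
  proof (intro allI impI)
    fix \<epsilon> :: real assume "\<epsilon> > 0"
    then obtain k where k: "inverse (real (Suc k)) < \<epsilon>" using reals_Archimedean by blast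
    have "finite (Domain (stg c k))" using inv[of k] unfolding bfinv_def by (simp add: finite_Domain)
    then obtain N where N: "Domain (stg c k) \<subseteq> {..<N}" using finite_nat_iff_bounded by blast
    show "\<exists>N. \<forall>n\<ge>N. c n (\<phi> n) < \<epsilon>"
    proof (intro exI[of _ "max N 1"] allI impI)
      fix n assume n: "n \<ge> max N 1"
      then have "(n, \<phi> n) \<in> R" using \<phi>R[of n] by simp
      then obtain j where j: "(n, \<phi> n) \<in> stg c j" unfolding R_def by blast
      have nk: "(n, \<phi> n) \<notin> stg c k"
      proof
        assume "(n, \<phi> n) \<in> stg c k"
        then have "n \<in> Domain (stg c k)" by blast
        with N have "n < N" by blast
        with n show False by simp
      qed
      have "k \<le> j"
      proof (rule ccontr)
        assume "\<not> k \<le> j"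
        then have "stg c j \<subseteq> stg c k" using mono by simp
        then show False using j nk by blast
      qed
      then have "c n (\<phi> n) < 1 / real (Suc k)" using err[of k j "(n, \<phi> n)"] j nk by simp
      then show "c n (\<phi> n) < \<epsilon>" using k by (simp add: inverse_eq_divide)
    qed
  qed
  have P4: "\<forall>\<epsilon>>0. \<exists>N. \<forall>m\<ge>N. c (\<psi> m) m < \<epsilon>"
  proof (intro allI impI)
    fix \<epsilon> :: real assume "\<epsilon> > 0"
    then obtain k where k: "inverse (real (Suc k)) < \<epsilon>" using reals_Archimedean by blast
    have "finite (Range (stg c k))" using inv[of k] unfolding bfinv_def by (simp add: finite_Range)
    then obtain N where N: "Range (stg c k) \<subseteq> {..<N}" using finite_nat_iff_bounded by blast
    show "\<exists>N. \<forall>m\<ge>N. c (\<psi> m) m < \<epsilon>"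
    proof (intro exI[of _ "max N 1"] allI impI)
      fix m assume m: "m \<ge> max N 1"
      then have "(\<psi> m, m) \<in> R" using \<psi>R[of m] by simp
      then obtain j where j: "(\<psi> m, m) \<in> stg c j" unfolding R_def by blast
      have nk: "(\<psi> m, m) \<notin> stg c k"
      proof
        assume "(\<psi> m, m) \<in> stg c k"
        then have "m \<in> Range (stg c k)" by blast
        with N have "m < N" by blast
        with m show False by simp
      qed
      have "k \<le> j"
      proof (rule ccontr)
        assume "\<not> k \<le> j"
        then have "stg c j \<subseteq> stg c k" using mono by simp
        then show False using j nk by blast
      qed
      then have "c (\<psi> m) m < 1 / real (Suc k)" using err[of k j "(\<psi> m, m)"] j nk by simp
      then show "c (\<psi> m) m < \<epsilon>" using k by (simp add: inverse_eq_divide)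
    qed
  qed
  show ?thesis
    apply (rule exI[of _ \<phi>])
    apply (rule exI[of _ \<psi>])
    using P1 P2 P3 P4 by (intro conjI)
qed



lemma Fmap_image:
  assumes "g ` X \<subseteq> Y" "\<forall>n\<ge>1. \<phi> n \<ge> (1::nat)" "\<forall>n\<ge>1. d n \<in> X"
  shows "Fmap g \<phi> e ` I_space X d \<subseteq> I_space Y e"
proof
  fix q assume "q \<in> Fmap g \<phi> e ` I_space X d"
  then obtain p where p: "p \<in> I_space X d" "q = Fmap g \<phi> e p" by blast
  from p(1) consider x where "x \<in> X" "p = (x, 0)" | n where "n \<ge> 1" "p = (d n, 1 / real n)"
    unfolding I_space_def by auto
  then show "q \<in> I_space Y e"
  proof cases
    case 1 then show ?thesis using p assms(1) unfolding I_space_def by auto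
  next
    case 2 then show ?thesis using p assms(2) unfolding I_space_def by auto
  qed
qed

lemma Fmap_inv:
  assumes "\<forall>x\<in>X. g' (g x) = x" "\<forall>n\<ge>1. \<phi> n \<ge> 1 \<and> \<psi> (\<phi> n) = (n::nat)"
  shows "\<forall>p\<in>I_space X d. Fmap g' \<psi> d (Fmap g \<phi> e p) = p"
proof
  fix p assume p: "p \<in> I_space X d"
  from p consider x where "x \<in> X" "p = (x, 0)" | n where "n \<ge> 1" "p = (d n, 1 / real n)"
    unfolding I_space_def by auto
  then show "Fmap g' \<psi> d (Fmap g \<phi> e p) = p"
  proof cases
    case 1 then show ?thesis using assms(1) by simp
  next
    case 2 then show ?thesis using assms(2) by simp
  qed
qed

lemma approx_inf:
  fixes X A :: "'a::metric_space set" and Y B :: "'b::metric_space set"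
  assumes hom: "homeomorphism X Y g g'" and gA: "g ` A = B" and AX: "A \<subseteq> X" and BY: "B \<subseteq> Y"
    and dA: "dense_enum A d" and eB: "dense_enum B e"
  shows "\<forall>n\<ge>1. \<forall>\<epsilon>>0. infinite {m. m \<ge> 1 \<and> max (dist (d n) (g' (e m))) (dist (e m) (g (d n))) < \<epsilon>}"
proof (intro allI impI)
  fix n :: nat and \<epsilon> :: real assume n: "n \<ge> 1" and ep: "\<epsilon> > 0"
  have a: "d n \<in> A" using dA n unfolding dense_enum_def by auto
  then have b: "g (d n) \<in> B" "g (d n) \<in> Y" using gA BY by auto
  have ga: "g' (g (d n)) = d n" using hom a AX unfolding homeomorphism_def by auto
  have cg': "continuous_on Y g'" using hom unfolding homeomorphism_def by auto
  have "\<exists>\<delta>>0. \<forall>y\<in>Y. dist y (g (d n)) < \<delta> \<longrightarrow> dist (g' y) (g' (g (d n))) < \<epsilon>"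
    using cg' b(2) ep unfolding continuous_on_iff by blast
  then obtain \<delta>1 where d1: "\<delta>1 > 0" "\<And>y. y \<in> Y \<Longrightarrow> dist y (g (d n)) < \<delta>1 \<Longrightarrow> dist (g' y) (g' (g (d n))) < \<epsilon>"
    by blast
  have cl: "g (d n) \<in> closure (e ` {1..})" using eB b(1) unfolding dense_enum_def by auto
  have "min \<delta>1 \<epsilon> > 0" using d1(1) ep by simp
  then obtain y where y: "y \<in> e ` {1..}" "dist y (g (d n)) < min \<delta>1 \<epsilon>"
    using cl unfolding closure_approachable by blast
  then obtain m0 where m0: "m0 \<ge> 1" "e m0 = y" by auto
  have inf: "infinite {m. m \<ge> 1 \<and> e m = e m0}" using eB m0(1) unfolding dense_enum_def by auto
  have yY: "y \<in> Y" using y(1) eB BY unfolding dense_enum_def by auto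
  show "infinite {m. m \<ge> 1 \<and> max (dist (d n) (g' (e m))) (dist (e m) (g (d n))) < \<epsilon>}"
  proof (rule infinite_super[OF _ inf], rule subsetI)
    fix m assume "m \<in> {m. m \<ge> 1 \<and> e m = e m0}"
    then have m: "m \<ge> 1" "e m = y" using m0 by auto
    have "dist (g' y) (d n) < \<epsilon>" using d1(2)[OF yY] y(2) ga by simp
    then show "m \<in> {m. m \<ge> 1 \<and> max (dist (d n) (g' (e m))) (dist (e m) (g (d n))) < \<epsilon>}"
      using m y(2) by (simp add: dist_commute)
  qed
qed

lemma big_from_inv:
  assumes "\<forall>n\<ge>1. \<psi> (\<phi> n) = (n::nat)"
  shows "\<exists>N. \<forall>n\<ge>N. \<phi> n \<ge> (M::nat)"
proof (intro exI[of _ "Suc (Max (\<psi> ` {..<M}))"] allI impI)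
  fix n assume n: "Suc (Max (\<psi> ` {..<M})) \<le> n"
  show "M \<le> \<phi> n"
  proof (rule ccontr)
    assume "\<not> M \<le> \<phi> n"
    then have "\<psi> (\<phi> n) \<in> \<psi> ` {..<M}" by auto
    moreover have "\<psi> (\<phi> n) = n" using assms n by auto
    ultimately have "n \<le> Max (\<psi> ` {..<M})" by simp
    then show False using n by simp
  qed
qed

lemma part1:
  fixes X A :: "'a::metric_space set" and Y B :: "'b::metric_space set"
  assumes hom: "homeomorphism X Y g g'" and gA: "g ` A = B" and AX: "A \<subseteq> X" and BY: "B \<subseteq> Y"
    and dA: "dense_enum A d" and eB: "dense_enum B e"
  shows "\<exists>F F'. homeomorphism (I_space X d) (I_space Y e) F F' \<and> (\<forall>x\<in>X. F (x, 0) = (g x, 0))"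
proof -
  define c where "c n m = max (dist (d n) (g' (e m))) (dist (e m) (g (d n)))" for n m
  have H1: "\<forall>n\<ge>1. \<forall>\<epsilon>>0. infinite {m. m \<ge> 1 \<and> c n m < \<epsilon>}"
    unfolding c_def by (rule approx_inf[OF hom gA AX BY dA eB])
  have hom': "homeomorphism Y X g' g" using hom by (rule homeomorphism_symD)
  have gB: "g' ` B = A"
  proof -
    have "g' ` B = g' ` g ` A" using gA by simp
    also have "\<dots> = (\<lambda>x. g' (g x)) ` A" by (simp add: image_image)
    also have "\<dots> = (\<lambda>x. x) ` A"
      by (rule image_cong) (use hom AX in \<open>auto simp: homeomorphism_def\<close>)
    also have "\<dots> = A" by simp
    finally show ?thesis .
  qed
  have H2: "\<forall>m\<ge>1. \<forall>\<epsilon>>0. infinite {n. n \<ge> 1 \<and> c n m < \<epsilon>}"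
  proof -
    have cc: "\<And>n m. c n m = max (dist (e m) (g (d n))) (dist (d n) (g' (e m)))"
      unfolding c_def by (rule max.commute)
    show ?thesis using approx_inf[OF hom' gB BY AX eB dA] by (simp only: cc)
  qed
  obtain \<phi> \<psi> where P1: "\<forall>n\<ge>1. \<phi> n \<ge> 1 \<and> \<psi> (\<phi> n) = n" and P2: "\<forall>m\<ge>1. \<psi> m \<ge> 1 \<and> \<phi> (\<psi> m) = m"
    and P3: "\<forall>\<epsilon>>0. \<exists>N. \<forall>n\<ge>N. c n (\<phi> n) < \<epsilon>" and P4: "\<forall>\<epsilon>>0. \<exists>N. \<forall>m\<ge>N. c (\<psi> m) m < \<epsilon>"
    using back_forth[OF H1 H2] by blast
  have dX: "\<forall>n\<ge>1. d n \<in> X" using dA AX unfolding dense_enum_def by auto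
  have eY: "\<forall>n\<ge>1. e n \<in> Y" using eB BY unfolding dense_enum_def by auto
  have gXY: "g ` X = Y" "g' ` Y = X" "\<forall>x\<in>X. g' (g x) = x" "\<forall>y\<in>Y. g (g' y) = y"
    "continuous_on X g" "continuous_on Y g'"
    using hom unfolding homeomorphism_def by auto
  have cF: "continuous_on (I_space X d) (Fmap g \<phi> e)"
  proof (rule Fmap_cont[where h = g'])
    show "continuous_on X g" by fact
    show "\<And>n. n \<ge> 1 \<Longrightarrow> d n \<in> X" using dX by auto
    show "\<And>n. n \<ge> 1 \<Longrightarrow> g' (e (\<phi> n)) \<in> X \<and> g (g' (e (\<phi> n))) = e (\<phi> n)"
      using P1 eY gXY by auto
    show "\<And>\<epsilon>. \<epsilon> > 0 \<Longrightarrow> \<exists>N. \<forall>n\<ge>N. dist (d n) (g' (e (\<phi> n))) < \<epsilon>"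
    proof -
      fix \<epsilon> :: real assume "\<epsilon> > 0"
      then obtain N where N: "\<forall>n\<ge>N. c n (\<phi> n) < \<epsilon>" using P3 by blast
      have "\<forall>n\<ge>N. dist (d n) (g' (e (\<phi> n))) < \<epsilon>"
      proof (intro allI impI)
        fix n assume "n \<ge> N"
        then have "c n (\<phi> n) < \<epsilon>" using N by blast
        then show "dist (d n) (g' (e (\<phi> n))) < \<epsilon>" unfolding c_def by simp
      qed
      then show "\<exists>N. \<forall>n\<ge>N. dist (d n) (g' (e (\<phi> n))) < \<epsilon>" by blast
    qed
    show "\<And>M. \<exists>N. \<forall>n\<ge>N. \<phi> n \<ge> M" using big_from_inv P1 by blast
  qed
  have cF': "continuous_on (I_space Y e) (Fmap g' \<psi> d)"
  proof (rule Fmap_cont[where h = g])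
    show "continuous_on Y g'" by fact
    show "\<And>n. n \<ge> 1 \<Longrightarrow> e n \<in> Y" using eY by auto
    show "\<And>n. n \<ge> 1 \<Longrightarrow> g (d (\<psi> n)) \<in> Y \<and> g' (g (d (\<psi> n))) = d (\<psi> n)"
      using P2 dX gXY by auto
    show "\<And>\<epsilon>. \<epsilon> > 0 \<Longrightarrow> \<exists>N. \<forall>n\<ge>N. dist (e n) (g (d (\<psi> n))) < \<epsilon>"
    proof -
      fix \<epsilon> :: real assume "\<epsilon> > 0"
      then obtain N where N: "\<forall>n\<ge>N. c (\<psi> n) n < \<epsilon>" using P4 by blast
      have "\<forall>n\<ge>N. dist (e n) (g (d (\<psi> n))) < \<epsilon>"
      proof (intro allI impI)
        fix n assume "n \<ge> N"
        then have "c (\<psi> n) n < \<epsilon>" using N by blast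
        then show "dist (e n) (g (d (\<psi> n))) < \<epsilon>" unfolding c_def by simp
      qed
      then show "\<exists>N. \<forall>n\<ge>N. dist (e n) (g (d (\<psi> n))) < \<epsilon>" by blast
    qed
    show "\<And>M. \<exists>N. \<forall>n\<ge>N. \<psi> n \<ge> M" using big_from_inv P2 by blast
  qed
  have im1: "Fmap g \<phi> e ` I_space X d \<subseteq> I_space Y e"
    by (rule Fmap_image) (use gXY P1 dX in auto)
  have im2: "Fmap g' \<psi> d ` I_space Y e \<subseteq> I_space X d"
    by (rule Fmap_image) (use gXY P2 eY in auto)
  have inv1: "\<forall>p\<in>I_space X d. Fmap g' \<psi> d (Fmap g \<phi> e p) = p"
    by (rule Fmap_inv) (use gXY P1 in auto)
  have inv2: "\<forall>p\<in>I_space Y e. Fmap g \<phi> e (Fmap g' \<psi> d p) = p"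
    by (rule Fmap_inv) (use gXY P2 in auto)
  have "homeomorphism (I_space X d) (I_space Y e) (Fmap g \<phi> e) (Fmap g' \<psi> d)"
    by (rule homeomorphismI) (use cF cF' im1 im2 inv1 inv2 in auto)
  moreover have "\<forall>x\<in>X. Fmap g \<phi> e (x, 0) = (g x, 0)" by simp
  ultimately show ?thesis by blast
qed



lemma homeo_limpt:
  fixes S :: "'a::metric_space set" and T :: "'b::metric_space set"
  assumes hom: "homeomorphism S T f f'" and p: "p \<in> S" and U: "U \<subseteq> S" and lp: "p islimpt U"
  shows "f p islimpt f ` U"
proof -
  obtain s where s: "\<forall>n. s n \<in> U - {p}" "s \<longlonglongrightarrow> p" using lp unfolding islimpt_sequential by blast
  have cont: "continuous_on S f" and inv: "\<forall>x\<in>S. f' (f x) = x" using hom unfolding homeomorphism_def by auto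
  have "(\<lambda>n. f (s n)) \<longlonglongrightarrow> f p"
    by (rule continuous_on_tendsto_compose[OF cont s(2) p]) (use s U in \<open>auto intro: always_eventually\<close>)
  moreover have "\<forall>n. f (s n) \<in> f ` U - {f p}"
  proof
    fix n
    have sn: "s n \<in> U" "s n \<noteq> p" using s(1) by auto
    have "f (s n) \<noteq> f p"
    proof
      assume "f (s n) = f p"
      then have "f' (f (s n)) = f' (f p)" by simp
      then show False using inv sn U p by auto
    qed
    then show "f (s n) \<in> f ` U - {f p}" using sn by auto
  qed
  ultimately show ?thesis unfolding islimpt_sequential by (intro exI[of _ "\<lambda>n. f (s n)"]) blast
qed

lemma homeo_limpt_image:
  fixes S :: "'a::metric_space set" and T :: "'b::metric_space set"
  assumes hom: "homeomorphism S T f f'" and U: "U \<subseteq> S"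
  shows "f ` {p\<in>S. p islimpt U} = {q\<in>T. q islimpt f ` U}"
proof
  have fS: "f ` S = T" using hom unfolding homeomorphism_def by auto
  show "f ` {p\<in>S. p islimpt U} \<subseteq> {q\<in>T. q islimpt f ` U}"
    using homeo_limpt[OF hom _ U] fS by blast
  show "{q\<in>T. q islimpt f ` U} \<subseteq> f ` {p\<in>S. p islimpt U}"
  proof
    fix q assume q: "q \<in> {q\<in>T. q islimpt f ` U}"
    have hom': "homeomorphism T S f' f" using hom by (rule homeomorphism_symD)
    have inv: "\<forall>x\<in>S. f' (f x) = x" "\<forall>y\<in>T. f (f' y) = y" "f' ` T = S" using hom unfolding homeomorphism_def by auto
    have fU: "f ` U \<subseteq> T" using fS U by auto
    have "f' q islimpt f' ` f ` U" using homeo_limpt[OF hom' _ fU] q by blast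
    moreover have "f' ` f ` U = U"
    proof -
      have "f' ` f ` U = (\<lambda>x. f' (f x)) ` U" by (simp add: image_image)
      also have "\<dots> = (\<lambda>x. x) ` U" by (rule image_cong) (use inv U in auto)
      finally show ?thesis by simp
    qed
    ultimately have "f' q \<in> {p\<in>S. p islimpt U}" using inv q by auto
    moreover have "q = f (f' q)" using inv q by auto
    ultimately show "q \<in> f ` {p\<in>S. p islimpt U}" by blast
  qed
qed

lemma A_limpt:
  assumes dA: "dense_enum A d" and x: "x \<in> A"
  shows "(x, 0::real) islimpt (I_space X d - X \<times> {0::real})"
  unfolding islimpt_approachable
proof (intro allI impI)
  fix \<epsilon> :: real assume ep: "\<epsilon> > 0"
  have "x \<in> closure (d ` {1..})" using dA x unfolding dense_enum_def by auto
  moreover have "\<epsilon> / 2 > 0" using ep by simp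
  ultimately obtain y where y: "y \<in> d ` {1..}" "dist y x < \<epsilon> / 2" unfolding closure_approachable by blast
  then obtain n0 where n0: "n0 \<ge> 1" "d n0 = y" by auto
  have "infinite {m. m \<ge> 1 \<and> d m = d n0}" using dA n0(1) unfolding dense_enum_def by auto
  then obtain m where m: "m \<ge> nat \<lceil>2 / \<epsilon>\<rceil> + 1" "m \<ge> 1" "d m = d n0"
    unfolding infinite_nat_iff_unbounded_le by blast
  have "2 / \<epsilon> < real m" using m(1) by linarith
  then have m2: "1 / real m < \<epsilon> / 2" using ep m(2) by (simp add: field_simps)
  have "(d m, 1 / real m) \<in> I_space X d - X \<times> {0}" using m(2) unfolding I_space_def by auto
  moreover have "(d m, 1 / real m) \<noteq> (x, 0)" using m(2) by simp
  moreover have "dist (d m, 1 / real m) (x, 0) < \<epsilon>"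
  proof -
    have "dist (d m, 1 / real m) (x, 0) \<le> dist (d m) x + dist (1 / real m) 0" by (rule dist_pair_le)
    moreover have "dist (1 / real m) 0 = 1 / real m" by (simp add: dist_real_def)
    moreover have "dist (d m) x < \<epsilon> / 2" using y(2) n0 m(3) by simp
    ultimately show ?thesis using m2 by linarith
  qed
  ultimately show "\<exists>x'\<in>I_space X d - X \<times> {0}. x' \<noteq> (x, 0) \<and> dist x' (x, 0) < \<epsilon>" by blast
qed

lemma pt_not_limpt:
  assumes "n \<ge> 1"
  shows "\<not> (d n, 1 / real n) islimpt I_space X d"
proof
  assume "(d n, 1 / real n) islimpt I_space X d"
  moreover have "1 / real n - 1 / (real n + 1) > 0"
  proof -
    have "real n > 0" using assms by simp
    then show ?thesis by (simp add: field_simps add_pos_pos)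
  qed
  ultimately obtain q where "q \<in> I_space X d" "q \<noteq> (d n, 1 / real n)" "dist q (d n, 1 / real n) < 1 / real n - 1 / (real n + 1)"
    unfolding islimpt_approachable by blast
  then show False using iso_rad[OF assms] by blast
qed

lemma L1:
  assumes AX: "A \<subseteq> X" and iso: "isolated_points X \<subseteq> A" and dA: "dense_enum A d"
  shows "{p \<in> I_space X d. p islimpt I_space X d} = X \<times> {0::real}"
proof
  show "{p \<in> I_space X d. p islimpt I_space X d} \<subseteq> X \<times> {0}"
  proof
    fix p assume p: "p \<in> {p \<in> I_space X d. p islimpt I_space X d}"
    then consider x where "x \<in> X" "p = (x, 0)" | n where "n \<ge> 1" "p = (d n, 1 / real n)"
      unfolding I_space_def by auto
    then show "p \<in> X \<times> {0}"
    proof cases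
      case 1 then show ?thesis by simp
    next
      case 2 then show ?thesis using p pt_not_limpt[of n d X] by simp
    qed
  qed
  show "X \<times> {0} \<subseteq> {p \<in> I_space X d. p islimpt I_space X d}"
  proof
    fix p assume "p \<in> X \<times> {0::real}"
    then obtain x where x: "x \<in> X" "p = (x, 0)" by auto
    have pS: "p \<in> I_space X d" using x unfolding I_space_def by auto
    have "p islimpt I_space X d"
    proof (cases "x \<in> A")
      case True
      then show ?thesis using A_limpt[OF dA True, of X] x(2) islimpt_subset by blast
    next
      case False
      then have "x islimpt X" using iso x(1) unfolding isolated_points_def by auto
      show ?thesis unfolding islimpt_approachable
      proof (intro allI impI)
        fix \<epsilon> :: real assume "\<epsilon> > 0"
        then obtain x' where "x' \<in> X" "x' \<noteq> x" "dist x' x < \<epsilon>"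
          using \<open>x islimpt X\<close> unfolding islimpt_approachable by blast
        moreover have "(x', 0) \<in> I_space X d" using \<open>x' \<in> X\<close> unfolding I_space_def by auto
        ultimately show "\<exists>x'\<in>I_space X d. x' \<noteq> p \<and> dist x' p < \<epsilon>"
          using x(2) by (intro bexI[of _ "(x', 0)"]) (auto simp: dist_pair_same)
      qed
    qed
    then show "p \<in> {p \<in> I_space X d. p islimpt I_space X d}" using pS by simp
  qed
qed

lemma L2:
  assumes AX: "A \<subseteq> X" and cA: "closed A" and dA: "dense_enum A d"
  shows "{p \<in> I_space X d. p islimpt (I_space X d - X \<times> {0::real})} = A \<times> {0::real}"
proof
  show "{p \<in> I_space X d. p islimpt (I_space X d - X \<times> {0})} \<subseteq> A \<times> {0}"
  proof
    fix p assume p: "p \<in> {p \<in> I_space X d. p islimpt (I_space X d - X \<times> {0})}"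
    then have pl: "p islimpt (I_space X d - X \<times> {0})" by simp
    from p consider x where "x \<in> X" "p = (x, 0)" | n where "n \<ge> 1" "p = (d n, 1 / real n)"
      unfolding I_space_def by auto
    then show "p \<in> A \<times> {0}"
    proof cases
      case 2
      have "p islimpt I_space X d" using pl islimpt_subset by blast
      then show ?thesis using 2 pt_not_limpt[of n d X] by simp
    next
      case 1
      have "x \<in> A"
      proof (rule closed_approachable[OF cA, THEN iffD1], intro allI impI)
        fix \<epsilon> :: real assume "\<epsilon> > 0"
        then obtain q where q: "q \<in> I_space X d - X \<times> {0}" "dist q p < \<epsilon>"
          using pl unfolding islimpt_approachable by blast
        then obtain n where n: "n \<ge> 1" "q = (d n, 1 / real n)" unfolding I_space_def by auto
        have "d n \<in> A" using dA n(1) unfolding dense_enum_def by auto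
        moreover have "dist (d n) x < \<epsilon>" using dist_fst_le[of q p] q(2) n(2) 1(2) by simp
        ultimately show "\<exists>y\<in>A. dist y x < \<epsilon>" by blast
      qed
      then show ?thesis using 1 by simp
    qed
  qed
  show "A \<times> {0} \<subseteq> {p \<in> I_space X d. p islimpt (I_space X d - X \<times> {0})}"
  proof
    fix p assume "p \<in> A \<times> {0::real}"
    then obtain x where x: "x \<in> A" "p = (x, 0)" by auto
    have "p \<in> I_space X d" using x AX unfolding I_space_def by auto
    then show "p \<in> {p \<in> I_space X d. p islimpt (I_space X d - X \<times> {0})}"
      using A_limpt[OF dA x(1), of X] x(2) by simp
  qed
qed

lemma part2:
  fixes X A :: "'a::metric_space set" and Y B :: "'b::metric_space set"
  assumes "closed A" "A \<subseteq> X" "closed B" "B \<subseteq> Y"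
    and "isolated_points X \<subseteq> A" "isolated_points Y \<subseteq> B"
    and "dense_enum A d" "dense_enum B e"
    and hom: "homeomorphism (I_space X d) (I_space Y e) f f'"
  shows "f ` (X \<times> {0}) = Y \<times> {0} \<and> f ` (A \<times> {0}) = B \<times> {0}"
proof -
  have fS: "f ` I_space X d = I_space Y e" using hom unfolding homeomorphism_def by auto
  have X0: "f ` (X \<times> {0}) = Y \<times> {0}"
  proof -
    have "f ` (X \<times> {0}) = f ` {p \<in> I_space X d. p islimpt I_space X d}"
      using L1[OF assms(2,5,7)] by simp
    also have "\<dots> = {q \<in> I_space Y e. q islimpt f ` I_space X d}"
      by (rule homeo_limpt_image[OF hom]) simp
    also have "\<dots> = Y \<times> {0}" using L1[OF assms(4,6,8)] fS by simp
    finally show ?thesis .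
  qed
  have inj: "inj_on f (I_space X d)"
    by (rule inj_on_inverseI[of _ f']) (use hom in \<open>auto simp: homeomorphism_def\<close>)
  have sub: "X \<times> {0} \<subseteq> I_space X d" unfolding I_space_def by auto
  have D: "f ` (I_space X d - X \<times> {0}) = I_space Y e - Y \<times> {0}"
    using inj_on_image_set_diff[OF inj _ sub] fS X0 by simp
  have "f ` (A \<times> {0}) = f ` {p \<in> I_space X d. p islimpt (I_space X d - X \<times> {0})}"
    using L2[OF assms(2,1,7)] by simp
  also have "\<dots> = {q \<in> I_space Y e. q islimpt f ` (I_space X d - X \<times> {0})}"
    by (rule homeo_limpt_image[OF hom]) auto
  also have "\<dots> = B \<times> {0}" using L2[OF assms(4,3,8)] D by simp
  finally show ?thesis using X0 by simp
qed


theorem proposition2: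
  fixes X A :: "'a::metric_space set" and Y B :: "'b::metric_space set"
    and d :: "nat \<Rightarrow> 'a" and e :: "nat \<Rightarrow> 'b"
  assumes "compact X" and "compact Y"
    and "closed A" and "A \<subseteq> X" and "closed B" and "B \<subseteq> Y"
    and "isolated_points X \<subseteq> A" and "isolated_points Y \<subseteq> B"
    and "dense_enum A d" and "dense_enum B e"
  shows "(\<forall>g g'. homeomorphism X Y g g' \<and> g ` A = B \<longrightarrow>
            (\<exists>F F'. homeomorphism (I_space X d) (I_space Y e) F F' \<and>
                     (\<forall>x\<in>X. F (x, 0) = (g x, 0))))
       \<and> (\<forall>f f'. homeomorphism (I_space X d) (I_space Y e) f f' \<longrightarrow>
            f ` (X \<times> {0}) = Y \<times> {0} \<and> f ` (A \<times> {0}) = B \<times> {0})"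
proof (intro conjI allI impI)
  fix g g' assume "homeomorphism X Y g g' \<and> g ` A = B"
  then show "\<exists>F F'. homeomorphism (I_space X d) (I_space Y e) F F' \<and> (\<forall>x\<in>X. F (x, 0) = (g x, 0))"
    using part1[of X Y g g' A B d e] assms by blast
next
  fix f f' assume "homeomorphism (I_space X d) (I_space Y e) f f'"
  then show "f ` (X \<times> {0}) = Y \<times> {0}" using part2[of A X B Y d e f f'] assms by blast
next
  fix f f' assume "homeomorphism (I_space X d) (I_space Y e) f f'"
  then show "f ` (A \<times> {0}) = B \<times> {0}" using part2[of A X B Y d e f f'] assms by blast
qed

end
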